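(* Let $t_1, t_2 \in \mathsf{Topo}$ and let $f$ embed $t_1$ inside $t_2$. For every $q \in \mathsf{PIFOTree}(t_1)$, if $\mathsf{pop}(q)$ is defined, then so is $\mathsf{pop}(\widehat f(q))$.
   Context: Fix a set $\mathsf{Pkt}$ of packets and a totally ordered set $\mathsf{Rk}$ of ranks (smaller is more favorable). PIFOs: for a set $S$, a PIFO over $S$ is a finite sequence of pairs $(s,r)\in S\times\mathsf{Rk}$ in insertion order; $\mathsf{PIFO}(S)$ is the set of these. $\mathsf{pop}_{\mathsf{PIFO}}(p)$ is undefined if $p$ is empty; otherwise it removes the entry of minimal rank (earliest-inserted among ties) and returns $(s,p')$, its element and the rest. Topologies: $\mathsf{Topo}$ is the smallest set with $*\in\mathsf{Topo}$ and $\mathsf{Node}(\vec t)\in\mathsf{Topo}$ for $n\in\mathbb{N}$, $\vec t\in\mathsf{Topo}^n$. PIFO trees: $\mathsf{Leaf}(p)\in\mathsf{PIFOTree}( * )$ for $p\in\mathsf{PIFO}(\mathsf{Pkt})$; $\mathsf{Internal}(\vec q,p)\in\mathsf{PIFOTree}(\mathsf{Node}(\vec t))$ whenever $\vec t\in\mathsf{Topo}^n$, $p\in\mathsf{PIFO}(\{1,\dots,n\})$, $\vec q[i]\in\mathsf{PIFOTree}(\vec t[i])$. $\vec q[q'/i]$ replaces the $i$-th entry by $q'$. pop (partial): $\mathsf{pop}(\mathsf{Leaf}(p))=(pkt,\mathsf{Leaf}(p'))$ if $\mathsf{pop}_{\mathsf{PIFO}}(p)=(pkt,p')$; $\mathsf{pop}(\mathsf{Internal}(\vec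 q,p))=(pkt,\mathsf{Internal}(\vec q[q'/i],p'))$ if $\mathsf{pop}_{\mathsf{PIFO}}(p)=(i,p')$ and $\mathsf{pop}(\vec q[i])=(pkt,q')$; undefined otherwise. Addresses: $\mathsf{Addr}(t)\subseteq\mathbb{N}^*$ is the smallest set with $\epsilon\in\mathsf{Addr}(t)$ and $i\cdot\alpha\in\mathsf{Addr}(\mathsf{Node}(\vec t))$ for $1\le i\le n$, $\alpha\in\mathsf{Addr}(\vec t[i])$. Subtrees: $t/\epsilon=t$, $\mathsf{Node}(\vec t)/(i\cdot\alpha)=\vec t[i]/\alpha$. An embedding of $t_1$ in $t_2$ is an injective $f:\mathsf{Addr}(t_1)\to\mathsf{Addr}(t_2)$ with $f(\epsilon)=\epsilon$, $t_2/f(\alpha)=*$ whenever $t_1/\alpha=*$, and $\alpha$ a prefix of $\alpha'$ iff $f(\alpha)$ a prefix of $f(\alpha')$. If $t_1=*$ then $t_2=*$; if $t_1=\mathsf{Node}(\vec t_1)$, the map $f_i$ defined by $f(i\cdot\alpha)=f(i)\cdot f_i(\alpha)$ is an embedding of $t_1/i$ in $t_2/f(i)$. Lifting $\widehat f:\mathsf{PIFOTree}(t_1)\to\mathsf{PIFOTree}(t_2)$, by recursion on $t_1$: if $t_1=*$, $\widehat f(q)=q$. If $t_1=\mathsf{Node}(\vec t_1)$ with $n$ children and $q=\mathsf{Internal}(\vec q,p)$, define for each address $\alpha$ of $t_2$ that is a prefix of some $f(i)$ a tree $\widehat f(q)_\alpha\in\mathsf{PIFOTree}(t_2/\alpha)$,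 from longer to shorter $\alpha$: if $\alpha=f(i)$, $\widehat f(q)_\alpha=\widehat{f_i}(\vec q[i])$; otherwise $t_2/\alpha$ has some $m$ children and $\widehat f(q)_\alpha=\mathsf{Internal}(\vec q_\alpha,p_\alpha)$, where $\vec q_\alpha[j]=\widehat f(q)_{\alpha\cdot j}$ if $\alpha\cdot j$ is a prefix of some $f(i)$ and otherwise $\vec q_\alpha[j]$ is the tree of topology $t_2/(\alpha\cdot j)$ with all PIFOs empty; and $p_\alpha$ is obtained from $p$ by replacing each entry $(i,r)$ by $(j,r)$ where $\alpha\cdot j$ is a prefix of $f(i)$, deleting entries for which no such $j$ exists, keeping the order. Finally $\widehat f(q)=\widehat f(q)_\epsilon$. *)

theory Defs
  imports Main "HOL-Library.Sublist"
begin

text \<open>A PIFO over a set S with ranks in a linear order 'r is a list of (element, rank)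
  pairs in insertion order.  pop removes the earliest-inserted entry of minimal rank.\<close>

definition pop_pifo :: "('a \<times> 'r::linorder) list \<Rightarrow> ('a \<times> ('a \<times> 'r) list) option" where
  "pop_pifo p =
     (if p = [] then None
      else (let k = (LEAST k. k < length p \<and> (\<forall>j<length p. snd (p ! k) \<le> snd (p ! j)))
            in Some (fst (p ! k), take k p @ drop (Suc k) p)))"

datatype topo = Star | Node "topo list"

text \<open>Raw PIFO trees; children of an internal node are indexed 1..n in the PIFO.\<close>
datatype ('pkt, 'r) ptree =
    Leaf "('pkt \<times> 'r) list"
  | Internal "('pkt, 'r) ptree list" "(nat \<times> 'r) list"

lemma size_nth_less_aux: "x < length xs \<Longrightarrow> g (xs ! x) < Suc (size_list g xs)"
  by (meson le_imp_less_Suc nth_mem order_refl size_list_estimation')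

function wf_tree :: "topo \<Rightarrow> ('pkt, 'r) ptree \<Rightarrow> bool" where
  "wf_tree Star (Leaf p) = True"
| "wf_tree (Node ts) (Internal qs p) =
     (length qs = length ts \<and> (\<forall>i<length ts. wf_tree (ts ! i) (qs ! i)) \<and>
      (\<forall>(i, r) \<in> set p. 1 \<le> i \<and> i \<le> length ts))"
| "wf_tree Star (Internal qs p) = False"
| "wf_tree (Node ts) (Leaf p) = False"
  by pat_completeness auto
termination
  by (relation "measure (\<lambda>(t, q). size t)") (auto intro: size_nth_less_aux)

function pop :: "('pkt, 'r::linorder) ptree \<Rightarrow> ('pkt \<times> ('pkt, 'r) ptree) option" where
  "pop (Leaf p) =
     (case pop_pifo p of None \<Rightarrow> None | Some (pkt, p') \<Rightarrow> Some (pkt, Leaf p'))"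
| "pop (Internal qs p) =
     (case pop_pifo p of
        None \<Rightarrow> None
      | Some (i, p') \<Rightarrow>
          (if 1 \<le> i \<and> i \<le> length qs then
             (case pop (qs ! (i - 1)) of
                None \<Rightarrow> None
              | Some (pkt, q') \<Rightarrow> Some (pkt, Internal (qs[i - 1 := q']) p'))
           else None))"
  by pat_completeness auto
termination
  apply (relation "measure size")
   apply simp
  apply clarsimp
  subgoal for qs p a b
  proof -
    assume "Suc 0 \<le> a" "a \<le> length qs"
    then have "a - Suc 0 < length qs" by simp
    then have "size (qs ! (a - Suc 0)) < Suc (size_list size qs)" by (rule size_nth_less_aux)
    then show ?thesis by simp
  qed
  done

inductive is_addr :: "topo \<Rightarrow> nat list \<Rightarrow> bool" where
  addr_Nil: "is_addr t []"
| addr_Cons: "1 \<le> i \<Longrightarrow> i \<le> length ts \<Longrightarrow> is_addr (ts ! (i - 1)) a \<Longrightarrow> is_addr (Node ts) (i # a)"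

fun child :: "topo \<Rightarrow> nat \<Rightarrow> topo" where
  "child (Node ts) i = ts ! (i - 1)"
| "child Star i = Star"

fun subtree :: "topo \<Rightarrow> nat list \<Rightarrow> topo" where
  "subtree t [] = t"
| "subtree t (i # a) = subtree (child t i) a"

definition is_embedding :: "topo \<Rightarrow> topo \<Rightarrow> (nat list \<Rightarrow> nat list) \<Rightarrow> bool" where
  "is_embedding t1 t2 f \<longleftrightarrow>
     (\<forall>a. is_addr t1 a \<longrightarrow> is_addr t2 (f a)) \<and>
     inj_on f {a. is_addr t1 a} \<and>
     f [] = [] \<and>
     (\<forall>a. is_addr t1 a \<and> subtree t1 a = Star \<longrightarrow> subtree t2 (f a) = Star) \<and>
     (\<forall>a a'. is_addr t1 a \<and> is_addr t1 a' \<longrightarrow> (prefix a a' \<longleftrightarrow> prefix (f a) (f a')))"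

fun empty_tree :: "topo \<Rightarrow> ('pkt, 'r) ptree" where
  "empty_tree Star = Leaf []"
| "empty_tree (Node ts) = Internal (map empty_tree ts) []"

definition relabel :: "(nat \<Rightarrow> nat list) \<Rightarrow> nat list \<Rightarrow> (nat \<times> 'r) list \<Rightarrow> (nat \<times> 'r) list" where
  "relabel F \<alpha> p =
     map (\<lambda>(i, r). (THE j. prefix (\<alpha> @ [j]) (F i), r))
         (filter (\<lambda>(i, r). \<exists>j. prefix (\<alpha> @ [j]) (F i)) p)"

text \<open>build n F Ls p t alpha computes the tree hat-f(q)_alpha of topology t = t2/alpha,
  where F i = f(i) for the n children, Ls ! (i-1) = lifting of the i-th subtree
  and p is the root PIFO of q.\<close>
function build :: "nat \<Rightarrow> (nat \<Rightarrow> nat list) \<Rightarrow> ('pkt, 'r) ptree list \<Rightarrow> (nat \<times> 'r) list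
                   \<Rightarrow> topo \<Rightarrow> nat list \<Rightarrow> ('pkt, 'r) ptree" where
  "build n F Ls p t \<alpha> =
     (if \<exists>i. 1 \<le> i \<and> i \<le> n \<and> F i = \<alpha> then
        Ls ! ((SOME i. 1 \<le> i \<and> i \<le> n \<and> F i = \<alpha>) - 1)
      else (case t of
              Star \<Rightarrow> Leaf []
            | Node ts \<Rightarrow>
                Internal
                  (map (\<lambda>j. if \<exists>i. 1 \<le> i \<and> i \<le> n \<and> prefix (\<alpha> @ [j]) (F i)
                            then build n F Ls p (ts ! (j - 1)) (\<alpha> @ [j])
                            else empty_tree (ts ! (j - 1)))
                       [1..<Suc (length ts)])
                  (relabel F \<alpha> p)))"
  by pat_completeness auto
termination
  apply (relation "measure (\<lambda>(n, F, Ls, p, t, \<alpha>). size t)")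
  by (auto intro!: size_nth_less_aux)

text \<open>Lifting hat-f : PIFOTree(t1) -> PIFOTree(t2), by recursion on t1.
  f_i is given by f(i.alpha) = f(i).f_i(alpha).\<close>
function lift :: "(nat list \<Rightarrow> nat list) \<Rightarrow> topo \<Rightarrow> topo \<Rightarrow> ('pkt, 'r) ptree \<Rightarrow> ('pkt, 'r) ptree" where
  "lift f Star t2 q = q"
| "lift f (Node ts1) t2 (Internal qs p) =
     build (length ts1) (\<lambda>i. f [i])
       (map (\<lambda>i. lift (\<lambda>a. drop (length (f [i])) (f (i # a))) (ts1 ! (i - 1))
                      (subtree t2 (f [i])) (qs ! (i - 1)))
            [1..<Suc (length ts1)])
       p t2 []"
| "lift f (Node ts1) t2 (Leaf p) = Leaf p"
  by pat_completeness auto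
termination
  apply (relation "measure (\<lambda>(f, t1, t2, q). size t1)")
  by (auto intro!: size_nth_less_aux)

end

theory Submission
  imports Defs
begin

lemma pop_pifo_split:
  assumes "\<forall>y\<in>set xs. snd e < snd y" "\<forall>y\<in>set ys. snd e \<le> snd y"
  shows "pop_pifo (xs @ e # ys) = Some (fst e, xs @ ys)"
proof -
  let ?p = "xs @ e # ys"
  let ?P = "\<lambda>k. k < length ?p \<and> (\<forall>j<length ?p. snd (?p ! k) \<le> snd (?p ! j))"
  have ek: "?p ! length xs = e" by simp
  have P: "?P (length xs)"
  proof -
    have "snd e \<le> snd (?p ! j)" if "j < length ?p" for j
    proof -
      consider (a) "j < length xs" | (b) "j = length xs" | (c) "j > length xs" by linarith
      then show ?thesis
      proof cases
        case a
        then have "?p ! j = xs ! j" by (simp add: nth_append)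
        moreover have "xs ! j \<in> set xs" using a by simp
        ultimately show ?thesis using assms(1) by (metis less_imp_le)
      next
        case b then show ?thesis by simp
      next
        case c
        then have "?p ! j = ys ! (j - Suc (length xs))" by (simp add: nth_append)
        moreover have "ys ! (j - Suc (length xs)) \<in> set ys" using c that by simp
        ultimately show ?thesis using assms(2) by metis
      qed
    qed
    then show ?thesis by simp
  qed
  have L: "(LEAST k. ?P k) = length xs"
  proof (rule Least_equality[of ?P, OF P])
    fix k assume "?P k"
    show "length xs \<le> k"
    proof (rule ccontr)
      assume "\<not> length xs \<le> k"
      then have k: "k < length xs" by simp
      then have "?p ! k = xs ! k" by (simp add: nth_append)
      moreover have "snd e < snd (xs ! k)" using assms(1) k by auto
      moreover have "snd (?p ! k) \<le> snd e"
      proof -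
        have "length xs < length ?p" by simp
        then have "snd (?p ! k) \<le> snd (?p ! length xs)" using \<open>?P k\<close> by blast
        then show ?thesis using ek by simp
      qed
      ultimately show False by simp
    qed
  qed
  have ne: "?p \<noteq> []" by simp
  have "pop_pifo ?p = Some (fst (?p ! (LEAST k. ?P k)), take (LEAST k. ?P k) ?p @ drop (Suc (LEAST k. ?P k)) ?p)"
    unfolding pop_pifo_def Let_def using ne by (simp only: if_False)
  then show ?thesis unfolding L by simp
qed

lemma pop_pifo_SomeD:
  assumes "pop_pifo p = Some (x, p')"
  shows "\<exists>xs e ys. p = xs @ e # ys \<and> (\<forall>y\<in>set xs. snd e < snd y) \<and> (\<forall>y\<in>set ys. snd e \<le> snd y) \<and> x = fst e"
proof -
  have ne: "p \<noteq> []"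
  proof
    assume "p = []"
    then have "pop_pifo p = None" unfolding pop_pifo_def by (simp only: simp_thms if_True)
    with assms show False by simp
  qed
  let ?P = "\<lambda>k. k < length p \<and> (\<forall>j<length p. snd (p ! k) \<le> snd (p ! j))"
  define m where "m = Min (snd ` set p)"
  have "m \<in> snd ` set p" using ne unfolding m_def by simp
  then obtain e0 where e0: "e0 \<in> set p" "m = snd e0" by blast
  then obtain k0 where k0: "k0 < length p" "p ! k0 = e0" unfolding in_set_conv_nth by blast
  have "?P k0"
  proof (intro conjI allI impI)
    show "k0 < length p" by (rule k0(1))
    fix j assume "j < length p"
    then have "snd (p ! j) \<in> snd ` set p" by simp
    then have "m \<le> snd (p ! j)" unfolding m_def by (intro Min_le) simp_all
    then show "snd (p ! k0) \<le> snd (p ! j)" using k0 e0 by simp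
  qed
  define k where "k = (LEAST k. ?P k)"
  have Pk: "?P k" unfolding k_def by (rule LeastI[of ?P k0, OF \<open>?P k0\<close>])
  have pk: "pop_pifo p = Some (fst (p ! k), take k p @ drop (Suc k) p)"
    unfolding pop_pifo_def Let_def k_def by (simp only: ne if_False)
  have x: "x = fst (p ! k)" using assms pk by simp
  have kl: "k < length p" using Pk by blast
  have split: "p = take k p @ p ! k # drop (Suc k) p" using kl by (rule id_take_nth_drop)
  have A: "\<forall>y\<in>set (take k p). snd (p ! k) < snd y"
  proof
    fix y assume "y \<in> set (take k p)"
    then obtain j where j0: "j < length (take k p)" "take k p ! j = y"
      by (metis in_set_conv_nth)
    then have j: "j < k" "y = p ! j" using kl by auto
    show "snd (p ! k) < snd y"
    proof (rule ccontr)
      assume "\<not> snd (p ! k) < snd y"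
      then have le: "snd (p ! j) \<le> snd (p ! k)" using j by simp
      have "?P j"
      proof (intro conjI allI impI)
        show "j < length p" using j kl by simp
        fix i assume "i < length p"
        then have "snd (p ! k) \<le> snd (p ! i)" using Pk by blast
        then show "snd (p ! j) \<le> snd (p ! i)" using le by (rule order_trans[rotated])
      qed
      then have "k \<le> j" unfolding k_def by (rule Least_le)
      with j show False by simp
    qed
  qed
  have B: "\<forall>y\<in>set (drop (Suc k) p). snd (p ! k) \<le> snd y"
  proof
    fix y assume "y \<in> set (drop (Suc k) p)"
    then obtain j where j0: "j < length (drop (Suc k) p)" "drop (Suc k) p ! j = y"
      by (metis in_set_conv_nth)
    then have "y = p ! (Suc k + j)" "Suc k + j < length p" by auto
    then show "snd (p ! k) \<le> snd y" using Pk by blast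
  qed
  show ?thesis
    apply (rule exI[of _ "take k p"])
    apply (rule exI[of _ "p ! k"])
    apply (rule exI[of _ "drop (Suc k) p"])
    using split A B x by (intro conjI)
qed

lemma is_addr_Cons_iff:
  "is_addr t (i # a) \<longleftrightarrow> (\<exists>ts. t = Node ts \<and> 1 \<le> i \<and> i \<le> length ts \<and> is_addr (ts ! (i - 1)) a)"
  by (auto elim: is_addr.cases intro: is_addr.intros)

lemma is_addr_append: "is_addr t (a @ b) \<Longrightarrow> is_addr (subtree t a) b"
proof (induction a arbitrary: t)
  case Nil then show ?case by simp
next
  case (Cons i a)
  then show ?case by (auto simp: is_addr_Cons_iff)
qed

lemma subtree_append: "subtree t (a @ b) = subtree (subtree t a) b"
  by (induction a arbitrary: t) auto

lemma prefix_drop_eq: "prefix u v \<Longrightarrow> v = u @ drop (length u) v"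
  by (metis append_eq_conv_conj prefix_def)

lemma embedding_child:
  assumes emb: "is_embedding (Node ts) t2 f" and i: "1 \<le> i" "i \<le> length ts"
  shows "is_embedding (ts ! (i - 1)) (subtree t2 (f [i])) (\<lambda>a. drop (length (f [i])) (f (i # a)))"
proof -
  let ?g = "\<lambda>a. drop (length (f [i])) (f (i # a))"
  have ai: "is_addr (Node ts) [i]" using i by (auto intro: is_addr.intros)
  have aia: "is_addr (Node ts) (i # a)" if "is_addr (ts ! (i - 1)) a" for a
    using i that by (auto intro: is_addr.intros)
  have eq': "f [i] @ ?g a = f (i # a)" if "is_addr (ts ! (i - 1)) a" for a
  proof -
    have "prefix [i] (i # a)" by simp
    then have "prefix (f [i]) (f (i # a))" using emb ai aia[OF that] unfolding is_embedding_def by blast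
    then show ?thesis by (metis prefix_drop_eq)
  qed
  show ?thesis unfolding is_embedding_def
  proof (intro conjI allI impI)
    fix a assume a: "is_addr (ts ! (i - 1)) a"
    have "is_addr t2 (f (i # a))" using emb aia[OF a] unfolding is_embedding_def by blast
    then have "is_addr t2 (f [i] @ ?g a)" unfolding eq'[OF a] .
    then show "is_addr (subtree t2 (f [i])) (?g a)" by (rule is_addr_append)
  next
    show "inj_on ?g {a. is_addr (ts ! (i - 1)) a}"
    proof (rule inj_onI)
      fix a a' assume a: "a \<in> {a. is_addr (ts ! (i - 1)) a}" and a': "a' \<in> {a. is_addr (ts ! (i - 1)) a}"
        and gg: "?g a = ?g a'"
      have a1: "is_addr (ts ! (i - 1)) a" and a2: "is_addr (ts ! (i - 1)) a'" using a a' by auto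
      have "f (i # a) = f [i] @ ?g a" using eq'[OF a1] by (rule sym)
      also have "\<dots> = f [i] @ ?g a'" using gg by (rule arg_cong)
      also have "\<dots> = f (i # a')" by (rule eq'[OF a2])
      finally have "f (i # a) = f (i # a')" .
      moreover have "is_addr (Node ts) (i # a)" "is_addr (Node ts) (i # a')" using aia a1 a2 by auto
      ultimately have "i # a = i # a'" using emb unfolding is_embedding_def inj_on_def by blast
      then show "a = a'" by simp
    qed
  next
    show "?g [] = []" by simp
  next
    fix a assume a: "is_addr (ts ! (i - 1)) a \<and> subtree (ts ! (i - 1)) a = Star"
    then have "subtree (Node ts) (i # a) = Star" by simp
    then have "subtree t2 (f (i # a)) = Star" using emb aia a unfolding is_embedding_def by blast
    then have "subtree t2 (f [i] @ ?g a) = Star" using a unfolding eq'[OF conjunct1[OF a]] by simp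
    then show "subtree (subtree t2 (f [i])) (?g a) = Star" by (simp only: subtree_append)
  next
    fix a a' assume a: "is_addr (ts ! (i - 1)) a \<and> is_addr (ts ! (i - 1)) a'"
    have a1: "is_addr (ts ! (i - 1)) a" and a2: "is_addr (ts ! (i - 1)) a'" using a by auto
    have "prefix a a' \<longleftrightarrow> prefix (i # a) (i # a')" by simp
    also have "\<dots> \<longleftrightarrow> prefix (f (i # a)) (f (i # a'))" using emb aia a unfolding is_embedding_def by blast
    also have "\<dots> \<longleftrightarrow> prefix (f [i] @ ?g a) (f [i] @ ?g a')" unfolding eq'[OF a1] eq'[OF a2] by (rule refl)
    also have "\<dots> \<longleftrightarrow> prefix (?g a) (?g a')" by (rule same_prefix_prefix)
    finally show "prefix a a' \<longleftrightarrow> prefix (?g a) (?g a')" .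
  qed
qed

lemma pop_map_filter:
  assumes "\<forall>y\<in>set xs. snd e < snd y" "\<forall>y\<in>set ys. snd e \<le> snd y" "P e"
    and g: "\<And>y. snd (g y) = snd y"
  shows "\<exists>p''. pop_pifo (map g (filter P (xs @ e # ys))) = Some (fst (g e), p'')"
proof -
  have eq: "map g (filter P (xs @ e # ys)) = map g (filter P xs) @ g e # map g (filter P ys)"
    using assms(3) by simp
  have A: "\<forall>y\<in>set (map g (filter P xs)). snd (g e) < snd y" using assms(1) g by auto
  have B: "\<forall>y\<in>set (map g (filter P ys)). snd (g e) \<le> snd y" using assms(2) g by auto
  show ?thesis unfolding eq using pop_pifo_split[OF A B] by blast
qed

lemma relabel_pop:
  assumes "\<forall>y\<in>set xs. r < snd y" "\<forall>y\<in>set ys. r \<le> snd y" and Fi: "F i = \<alpha> @ j # s"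
  shows "\<exists>p''. pop_pifo (relabel F \<alpha> (xs @ (i, r) # ys)) = Some (j, p'')"
proof -
  let ?g = "\<lambda>(i, r). (THE j. prefix (\<alpha> @ [j]) (F i), r)"
  let ?P = "\<lambda>(i, r). \<exists>j. prefix (\<alpha> @ [j]) (F i)"
  have g: "snd (?g y) = snd y" for y by (cases y) simp
  have P: "?P (i, r)" using Fi by auto
  have th: "(THE j'. prefix (\<alpha> @ [j']) (F i)) = j"
    by (rule the_equality) (simp_all add: Fi)
  have "\<exists>p''. pop_pifo (map ?g (filter ?P (xs @ (i, r) # ys))) = Some (fst (?g (i, r)), p'')"
    by (rule pop_map_filter) (use assms P g in auto)
  then show ?thesis unfolding relabel_def using th by simp
qed

lemma build_pop:
  assumes pe: "p = xs @ (i, r) # ys" "\<forall>y\<in>set xs. r < snd y" "\<forall>y\<in>set ys. r \<le> snd y"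
    and i: "1 \<le> i" "i \<le> n"
    and Li: "pop (Ls ! (i - 1)) \<noteq> None"
    and inj: "\<forall>i'. 1 \<le> i' \<and> i' \<le> n \<and> prefix (F i') (F i) \<longrightarrow> i' = i"
  shows "F i = \<alpha> @ s \<Longrightarrow> is_addr t s \<Longrightarrow> pop (build n F Ls p t \<alpha>) \<noteq> None"
proof (induction s arbitrary: \<alpha> t)
  case Nil
  have ex: "\<exists>i'. 1 \<le> i' \<and> i' \<le> n \<and> F i' = \<alpha>" using Nil i by auto
  have so: "(SOME i'. 1 \<le> i' \<and> i' \<le> n \<and> F i' = \<alpha>) = i"
    by (rule some_equality) (use i Nil inj in auto)
  have "build n F Ls p t \<alpha> = Ls ! (i - 1)"
    by (subst build.simps) (simp only: if_P[OF ex] so)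
  then show ?case using Li by simp
next
  case (Cons j s')
  have nex: "\<not> (\<exists>i'. 1 \<le> i' \<and> i' \<le> n \<and> F i' = \<alpha>)"
  proof
    assume "\<exists>i'. 1 \<le> i' \<and> i' \<le> n \<and> F i' = \<alpha>"
    then obtain i' where "1 \<le> i'" "i' \<le> n" "F i' = \<alpha>" by blast
    moreover have "prefix \<alpha> (F i)" using Cons.prems by simp
    ultimately have "i' = i" using inj by auto
    then show False using Cons.prems \<open>F i' = \<alpha>\<close> by simp
  qed
  obtain ts where t: "t = Node ts" and j: "1 \<le> j" "j \<le> length ts" and aj: "is_addr (ts ! (j - 1)) s'"
    using Cons.prems(2) unfolding is_addr_Cons_iff by blast
  define h where "h = (\<lambda>j. if \<exists>i. 1 \<le> i \<and> i \<le> n \<and> prefix (\<alpha> @ [j]) (F i)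
                            then build n F Ls p (ts ! (j - 1)) (\<alpha> @ [j])
                            else empty_tree (ts ! (j - 1)))"
  have b: "build n F Ls p t \<alpha> = Internal (map h [1..<Suc (length ts)]) (relabel F \<alpha> p)"
    by (subst build.simps) (simp only: if_not_P[OF nex] t topo.case h_def)
  obtain p'' where rp: "pop_pifo (relabel F \<alpha> p) = Some (j, p'')"
    using relabel_pop[OF pe(2,3), where F=F and \<alpha>=\<alpha> and j=j and s=s' and i=i] Cons.prems(1) pe(1) by auto
  have exi: "\<exists>i'. 1 \<le> i' \<and> i' \<le> n \<and> prefix (\<alpha> @ [j]) (F i')"
    using i Cons.prems(1) by auto
  have hj: "map h [1..<Suc (length ts)] ! (j - 1) = build n F Ls p (ts ! (j - 1)) (\<alpha> @ [j])"
  proof -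
    have len: "j - 1 < length [1..<Suc (length ts)]" using j by simp
    have nj: "[1..<Suc (length ts)] ! (j - 1) = j" using j by (simp del: upt_Suc add: nth_upt)
    show ?thesis unfolding nth_map[OF len] nj h_def by (rule if_P[OF exi])
  qed
  have ih: "pop (build n F Ls p (ts ! (j - 1)) (\<alpha> @ [j])) \<noteq> None"
    by (rule Cons.IH) (use Cons.prems(1) aj in simp_all)
  obtain pkt q' where pq: "pop (build n F Ls p (ts ! (j - 1)) (\<alpha> @ [j])) = Some (pkt, q')"
    using ih by auto
  have len: "length (map h [1..<Suc (length ts)]) = length ts" by (simp del: upt_Suc)
  show ?case unfolding b using rp j hj pq len
    by (simp del: build.simps upt_Suc)
qed

theorem lemma5p6:
  fixes t1 t2 :: topo and f :: "nat list \<Rightarrow> nat list"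
    and q :: "('pkt, 'r::linorder) ptree"
  assumes "is_embedding t1 t2 f"
    and "wf_tree t1 q"
    and "pop q \<noteq> None"
  shows "pop (lift f t1 t2 q) \<noteq> None"
  using assms
proof (induction t1 arbitrary: f t2 q)
  case Star
  then show ?case by simp
next
  case (Node ts)
  obtain qs p where q: "q = Internal qs p" using Node.prems(2) by (cases q) auto
  have wf: "length qs = length ts" "\<forall>i<length ts. wf_tree (ts ! i) (qs ! i)"
    "\<forall>(i, r) \<in> set p. 1 \<le> i \<and> i \<le> length ts"
    using Node.prems(2) q by auto
  obtain i p' where pp: "pop_pifo p = Some (i, p')" and i: "1 \<le> i" "i \<le> length qs"
    and pi: "pop (qs ! (i - 1)) \<noteq> None"
    using Node.prems(3) q by (auto split: option.splits if_splits)
  obtain xs e ys where sp: "p = xs @ e # ys" "\<forall>y\<in>set xs. snd e < snd y"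
    "\<forall>y\<in>set ys. snd e \<le> snd y" "i = fst e"
    using pop_pifo_SomeD[OF pp] by blast
  obtain r where e: "e = (i, r)" using sp(4) by (cases e) auto
  let ?n = "length ts"
  let ?Ls = "map (\<lambda>i. lift (\<lambda>a. drop (length (f [i])) (f (i # a))) (ts ! (i - 1))
                      (subtree t2 (f [i])) (qs ! (i - 1))) [1..<Suc ?n]"
  have l: "lift f (Node ts) t2 q = build ?n (\<lambda>i. f [i]) ?Ls p t2 []"
    using q by simp
  have in1: "1 \<le> i" "i \<le> ?n" using i wf by auto
  have Lsi: "?Ls ! (i - 1) = lift (\<lambda>a. drop (length (f [i])) (f (i # a))) (ts ! (i - 1))
                      (subtree t2 (f [i])) (qs ! (i - 1))"
  proof -
    have len: "i - 1 < length [1..<Suc ?n]" using in1 by simp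
    have ni: "[1..<Suc ?n] ! (i - 1) = i" using in1 by (simp del: upt_Suc add: nth_upt)
    show ?thesis unfolding nth_map[OF len] ni ..
  qed
  have mem: "ts ! (i - 1) \<in> set ts" using in1 by simp
  have emb: "is_embedding (ts ! (i - 1)) (subtree t2 (f [i])) (\<lambda>a. drop (length (f [i])) (f (i # a)))"
    by (rule embedding_child[OF Node.prems(1) in1])
  have wfi: "wf_tree (ts ! (i - 1)) (qs ! (i - 1))" using wf in1 by simp
  have Li: "pop (?Ls ! (i - 1)) \<noteq> None"
    unfolding Lsi by (rule Node.IH[OF mem emb wfi pi])
  have addr: "\<And>i'. 1 \<le> i' \<Longrightarrow> i' \<le> ?n \<Longrightarrow> is_addr (Node ts) [i']"
    by (auto intro: is_addr.intros)
  have inj: "\<forall>i'. 1 \<le> i' \<and> i' \<le> ?n \<and> prefix (f [i']) (f [i]) \<longrightarrow> i' = i"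
  proof (intro allI impI)
    fix i' assume h: "1 \<le> i' \<and> i' \<le> ?n \<and> prefix (f [i']) (f [i])"
    then have "prefix [i'] [i]" using Node.prems(1) addr[of i'] addr[OF in1] unfolding is_embedding_def by blast
    then show "i' = i" by simp
  qed
  have ai: "is_addr t2 (f [i])" using Node.prems(1) addr[OF in1] unfolding is_embedding_def by blast
  show ?case unfolding l
    by (rule build_pop[OF sp(1)[unfolded e] sp(2,3)[unfolded e, simplified] in1 Li inj, of "[]" "f [i]" t2])
       (simp_all add: ai)
qed

end
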